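(* Let $T$ be a reduced linear trellis of length $n$. Any two elementary trellis factorizations of $T$ have the same span distribution. More precisely, for every span $\mathfrak{s}$, the number of factors with span $\mathfrak{s}$ in any elementary trellis factorization of $T$ equals $$\dim\mathbb{S}_{\mathfrak{s}}(T)-\dim\mathbb{S}_{<\mathfrak{s}}(T)=\dim\bigl(\mathbb{S}_{\mathfrak{s}}(T)/\mathbb{S}_{<\mathfrak{s}}(T)\bigr).$$
   Context: Let $\mathbb{F}$ be a finite field and $n\ge1$; indices are taken in $\mathbb{Z}_n$. A trellis $T$ of length $n$ over $\mathbb{F}$ consists of pairwise disjoint finite vertex sets $V_i(T)$, $i\in\mathbb{Z}_n$, and edge sets $E_i(T)\subseteq V_i(T)\times\mathbb{F}\times V_{i+1}(T)$; $(v,\alpha,w)\in E_i(T)$ is an edge from $v$ to $w$ with label $\alpha$. Trellises are trim. $T$ is linear if each $V_i(T)$ is an $\mathbb{F}$-vector space and each $E_i(T)$ a subspace. A cycle is a closed path of length $n$ starting in $V_0(T)$, identified with $(\mathbf{v},\boldsymbol{\alpha})\in\prod_iV_i(T)\times\mathbb{F}^n$; $\mathbb{S}(T)$ is the space of cycles. $T$ is reduced if every edge lies on a cycle. $T\sim T'$ means there are bijections $f_i:V_i(T)\to V_i(T')$ with $(v,\alpha,w)\in E_i(T)\iff(f_i(v),\alpha,f_{i+1}(w))\in E_i(T')$. Spans: for $a\in\mathbb{Z}_n$, $0\le l\le n-1$, $[a,a+l]=\{a,\dots,a+l\}\subseteq\mathbb{Z}_n$, $(a,a+l]=[a,a+l]\setminus\{a\}$;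 $(a,l)$ is a span; degenerate spans are $\emptyset$ (length $-1$) and $\mathbb{Z}_n$ (length $n$, written $(a,n)$). Partial order: $(a_1,l_1)\le(a_2,l_2)$ iff ($l_1\le l_2<n-1$ and $[a_1,a_1+l_1]\subseteq[a_2,a_2+l_2]$) or ($l_2=n-1$ and $(a_1,a_1+l_1]\subseteq(a_2,a_2+l_2]$) or $l_1=-1$ or $l_2=n$. A vector in $\mathbb{F}^n$ has span $(a,l)$, $0\le l\le n-1$, if its support lies in $[a,a+l]$; $\mathbb{Z}_n$ is a span of every vector. A nondegenerate $(a,l)$ is a span of a cycle $(\mathbf{v},\boldsymbol{\alpha})$ if $\{i:v_i\ne0\}\subseteq(a,a+l]$ and $\{i:\alpha_i\ne0\}\subseteq[a,a+l]$; $\emptyset$ is a span only of the zero cycle and $\mathbb{Z}_n$ of every cycle. $\mathbb{S}_{\mathfrak{s}}(T)$ is the subspace of cycles with span $\mathfrak{s}$; $\mathbb{S}_{<\mathfrak{s}}(T):=\sum_{\mathfrak{s}'\lneq\mathfrak{s}}\mathbb{S}_{\mathfrak{s}'}(T)$. Elementary trellises and products: for $\boldsymbol{\alpha}\in\mathbb{F}^n$ with span $(a,l)$, $0\le l\le n$, the elementary trellis $\boldsymbol{\alpha}|(a,l)$ has $V_i=\mathbb{F}$ for $i\in(a,a+l]$ (all $i$ if $l=n$), $V_i=0$ otherwise, and $E_i=\langle(u_i,\alpha_i,u_{i+1})\rangle$ with $u_i=1$ if $i\in(a,a+l]$, $u_i=0$ otherwise. The product $T\otimes T'$ has $V_i=V_i(T)\times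 V_i(T')$ and $E_i=\{((v,v'),\alpha+\alpha',(w,w')):(v,\alpha,w)\in E_i(T),(v',\alpha',w')\in E_i(T')\}$. An elementary trellis factorization of $T$ is an expression $T\sim\bigotimes_{i=1}^r\boldsymbol{\alpha}^i|(a_i,l_i)$, where by convention at most one factor has span $(a,0)$ for each $a\in\mathbb{Z}_n$; its span distribution is the multiset $\{\{(a_i,l_i):i=1,\dots,r\}\}$. *)

theory Defs
  imports Complex_Main "HOL-Library.Function_Algebras" "HOL-Library.Product_Plus" "HOL-Library.Multiset"
begin

text \<open>Indices in Z_n are represented by naturals i < n; successor is (i+1) mod n.\<close>

definition nxt :: "nat \<Rightarrow> nat \<Rightarrow> nat" where
  "nxt n i = (i + 1) mod n"

definition is_trellis :: "nat \<Rightarrow> (nat \<Rightarrow> 'v set) \<Rightarrow> (nat \<Rightarrow> ('v \<times> 'a \<times> 'v) set) \<Rightarrow> bool" where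
  "is_trellis n V E \<longleftrightarrow>
     (\<forall>i<n. finite (V i) \<and> E i \<subseteq> V i \<times> UNIV \<times> V (nxt n i))"

definition trim :: "nat \<Rightarrow> (nat \<Rightarrow> 'v set) \<Rightarrow> (nat \<Rightarrow> ('v \<times> 'a \<times> 'v) set) \<Rightarrow> bool" where
  "trim n V E \<longleftrightarrow>
     (\<forall>i<n. \<forall>x\<in>V i. (\<exists>a y. (x, a, y) \<in> E i)) \<and>
     (\<forall>i<n. \<forall>y\<in>V (nxt n i). (\<exists>x a. (x, a, y) \<in> E i))"

definition linear_trellis ::
  "('a::field \<Rightarrow> 'v::ab_group_add \<Rightarrow> 'v) \<Rightarrow> nat \<Rightarrow> (nat \<Rightarrow> 'v set) \<Rightarrow> (nat \<Rightarrow> ('v \<times> 'a \<times> 'v) set) \<Rightarrow> bool" where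
  "linear_trellis sc n V E \<longleftrightarrow>
     is_trellis n V E \<and>
     (\<forall>i<n. module.subspace sc (V i)) \<and>
     (\<forall>i<n. (0, 0, 0) \<in> E i \<and>
        (\<forall>x a y x' a' y'. (x, a, y) \<in> E i \<longrightarrow> (x', a', y') \<in> E i \<longrightarrow> (x + x', a + a', y + y') \<in> E i) \<and>
        (\<forall>c x a y. (x, a, y) \<in> E i \<longrightarrow> (sc c x, c * a, sc c y) \<in> E i))"

text \<open>Cycles: closed paths of length n starting in V 0, identified with pairs
  (v, alpha) of vertex and label sequences; values at indices >= n are fixed to 0.\<close>
definition cycles :: "nat \<Rightarrow> (nat \<Rightarrow> 'v::zero set) \<Rightarrow> (nat \<Rightarrow> ('v \<times> 'a::zero \<times> 'v) set)
    \<Rightarrow> ((nat \<Rightarrow> 'v) \<times> (nat \<Rightarrow> 'a)) set" where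
  "cycles n V E = {(v, al). (\<forall>i<n. (v i, al i, v (nxt n i)) \<in> E i) \<and>
                            (\<forall>i\<ge>n. v i = 0 \<and> al i = 0)}"

definition reduced :: "nat \<Rightarrow> (nat \<Rightarrow> 'v::zero set) \<Rightarrow> (nat \<Rightarrow> ('v \<times> 'a::zero \<times> 'v) set) \<Rightarrow> bool" where
  "reduced n V E \<longleftrightarrow>
     (\<forall>i<n. \<forall>e\<in>E i. \<exists>(v, al)\<in>cycles n V E. e = (v i, al i, v (nxt n i)))"

definition trellis_equiv :: "nat \<Rightarrow> (nat \<Rightarrow> 'v set) \<Rightarrow> (nat \<Rightarrow> ('v \<times> 'a \<times> 'v) set)
    \<Rightarrow> (nat \<Rightarrow> 'w set) \<Rightarrow> (nat \<Rightarrow> ('w \<times> 'a \<times> 'w) set) \<Rightarrow> bool" where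
  "trellis_equiv n V E V' E' \<longleftrightarrow>
     (\<exists>f. (\<forall>i<n. bij_betw (f i) (V i) (V' i)) \<and>
          (\<forall>i<n. \<forall>x\<in>V i. \<forall>y\<in>V (nxt n i). \<forall>a.
              (x, a, y) \<in> E i \<longleftrightarrow> (f i x, a, f (nxt n i) y) \<in> E' i))"

definition cint_closed :: "nat \<Rightarrow> nat \<Rightarrow> nat \<Rightarrow> nat set" where
  "cint_closed n a l = {(a + j) mod n | j. j \<le> l}"

definition cint_open :: "nat \<Rightarrow> nat \<Rightarrow> nat \<Rightarrow> nat set" where
  "cint_open n a l = {(a + j) mod n | j. 1 \<le> j \<and> j \<le> l}"

text \<open>Spans: the empty span, the full span Z_n (all (a,n) denote the same span),
  and nondegenerate spans (a,l) with a < n, l <= n - 1.\<close>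
datatype span = SEmpty | SFull | Sp nat nat

definition is_span :: "nat \<Rightarrow> span \<Rightarrow> bool" where
  "is_span n s = (case s of Sp a l \<Rightarrow> a < n \<and> l < n | _ \<Rightarrow> True)"

definition span_le :: "nat \<Rightarrow> span \<Rightarrow> span \<Rightarrow> bool" where
  "span_le n s1 s2 = (s1 = SEmpty \<or> s2 = SFull \<or>
     (case (s1, s2) of
        (Sp a1 l1, Sp a2 l2) \<Rightarrow>
           (l1 \<le> l2 \<and> l2 < n - 1 \<and> cint_closed n a1 l1 \<subseteq> cint_closed n a2 l2) \<or>
           (l2 = n - 1 \<and> cint_open n a1 l1 \<subseteq> cint_open n a2 l2)
      | _ \<Rightarrow> False))"

text \<open>Span of a vector alpha in F^n (only used for nondegenerate (a,l) and (a,n)).\<close>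
definition vec_has_span :: "nat \<Rightarrow> (nat \<Rightarrow> 'a::zero) \<Rightarrow> nat \<Rightarrow> nat \<Rightarrow> bool" where
  "vec_has_span n al a l \<longleftrightarrow> l = n \<or> (\<forall>i<n. al i \<noteq> 0 \<longrightarrow> i \<in> cint_closed n a l)"

definition cycle_has_span :: "nat \<Rightarrow> span \<Rightarrow> (nat \<Rightarrow> 'v::zero) \<times> (nat \<Rightarrow> 'a::zero) \<Rightarrow> bool" where
  "cycle_has_span n s c = (case s of
      SEmpty \<Rightarrow> c = (0, 0)
    | SFull \<Rightarrow> True
    | Sp a l \<Rightarrow> (\<forall>i<n. fst c i \<noteq> 0 \<longrightarrow> i \<in> cint_open n a l) \<and>
                (\<forall>i<n. snd c i \<noteq> 0 \<longrightarrow> i \<in> cint_closed n a l))"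

definition cyc_scale :: "('a::field \<Rightarrow> 'v \<Rightarrow> 'v) \<Rightarrow> 'a \<Rightarrow> (nat \<Rightarrow> 'v) \<times> (nat \<Rightarrow> 'a)
    \<Rightarrow> (nat \<Rightarrow> 'v) \<times> (nat \<Rightarrow> 'a)" where
  "cyc_scale sc c x = (\<lambda>i. sc c (fst x i), \<lambda>i. c * snd x i)"

text \<open>S_s(T) and S_{<s}(T) (the sum of subspaces = span of their union).\<close>
definition cycles_span :: "nat \<Rightarrow> (nat \<Rightarrow> 'v::zero set) \<Rightarrow> (nat \<Rightarrow> ('v \<times> 'a::zero \<times> 'v) set)
    \<Rightarrow> span \<Rightarrow> ((nat \<Rightarrow> 'v) \<times> (nat \<Rightarrow> 'a)) set" where
  "cycles_span n V E s = {c \<in> cycles n V E. cycle_has_span n s c}"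

definition cycles_below :: "('a::field \<Rightarrow> 'v::ab_group_add \<Rightarrow> 'v) \<Rightarrow> nat \<Rightarrow> (nat \<Rightarrow> 'v set)
    \<Rightarrow> (nat \<Rightarrow> ('v \<times> 'a \<times> 'v) set) \<Rightarrow> span \<Rightarrow> ((nat \<Rightarrow> 'v) \<times> (nat \<Rightarrow> 'a)) set" where
  "cycles_below sc n V E s =
     module.span (cyc_scale sc)
       (\<Union>{cycles_span n V E s' | s'. is_span n s' \<and> span_le n s' s \<and> s' \<noteq> s})"

definition cdim :: "('a::field \<Rightarrow> 'v::ab_group_add \<Rightarrow> 'v) \<Rightarrow> ((nat \<Rightarrow> 'v) \<times> (nat \<Rightarrow> 'a)) set \<Rightarrow> nat" where
  "cdim sc S = vector_space.dim (cyc_scale sc) S"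

text \<open>A factor is a triple (alpha, a, l) with a < n and 0 <= l <= n, standing for alpha|(a,l).\<close>
definition active :: "nat \<Rightarrow> nat \<Rightarrow> nat \<Rightarrow> nat \<Rightarrow> bool" where
  "active n a l i \<longleftrightarrow> l = n \<or> i \<in> cint_open n a l"

definition elemV :: "nat \<Rightarrow> nat \<Rightarrow> nat \<Rightarrow> nat \<Rightarrow> 'a::field set" where
  "elemV n a l i = (if active n a l i then UNIV else {0})"

definition elemE :: "nat \<Rightarrow> (nat \<Rightarrow> 'a::field) \<Rightarrow> nat \<Rightarrow> nat \<Rightarrow> nat \<Rightarrow> ('a \<times> 'a \<times> 'a) set" where
  "elemE n al a l i =
     (let u = (\<lambda>j. if active n a l j then 1 else 0)
      in {(c * u i, c * al i, c * u (nxt n i)) | c. True})"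

text \<open>The product of a list of trellises T_1 \<otimes> ... \<otimes> T_r (vertices are lists of length r;
  the empty product is the one-vertex trellis with a single zero-labelled edge).\<close>
definition prodV :: "(nat \<Rightarrow> 'v set) list \<Rightarrow> nat \<Rightarrow> 'v list set" where
  "prodV Vs i = {xs. length xs = length Vs \<and> (\<forall>k<length Vs. xs ! k \<in> (Vs ! k) i)}"

definition prodE :: "(nat \<Rightarrow> ('v \<times> 'a::comm_monoid_add \<times> 'v) set) list \<Rightarrow> nat
    \<Rightarrow> ('v list \<times> 'a \<times> 'v list) set" where
  "prodE Es i = {(xs, sum_list bs, ys) | xs bs ys.
       length xs = length Es \<and> length bs = length Es \<and> length ys = length Es \<and>
       (\<forall>k<length Es. (xs ! k, bs ! k, ys ! k) \<in> (Es ! k) i)}"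

definition factor_span :: "nat \<Rightarrow> (nat \<Rightarrow> 'a) \<times> nat \<times> nat \<Rightarrow> span" where
  "factor_span n f = (case f of (al, a, l) \<Rightarrow> if l = n then SFull else Sp a l)"

definition elem_factorization :: "nat \<Rightarrow> (nat \<Rightarrow> 'v set) \<Rightarrow> (nat \<Rightarrow> ('v \<times> 'a::field \<times> 'v) set)
    \<Rightarrow> ((nat \<Rightarrow> 'a) \<times> nat \<times> nat) list \<Rightarrow> bool" where
  "elem_factorization n V E fs \<longleftrightarrow>
     (\<forall>(al, a, l) \<in> set fs. a < n \<and> l \<le> n \<and> vec_has_span n al a l) \<and>
     (\<forall>(al, a, l) \<in> set fs. l = 0 \<longrightarrow> al a \<noteq> 0) \<and>
     (\<forall>j k. j < length fs \<longrightarrow> k < length fs \<longrightarrow> j \<noteq> k \<longrightarrow>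
        snd (snd (fs ! j)) = 0 \<longrightarrow> snd (snd (fs ! k)) = 0 \<longrightarrow>
        fst (snd (fs ! j)) \<noteq> fst (snd (fs ! k))) \<and>
     trellis_equiv n V E
        (prodV (map (\<lambda>(al, a, l). elemV n a l) fs))
        (prodE (map (\<lambda>(al, a, l). elemE n al a l) fs))"

definition count_span :: "nat \<Rightarrow> ((nat \<Rightarrow> 'a) \<times> nat \<times> nat) list \<Rightarrow> span \<Rightarrow> nat" where
  "count_span n fs s = length (filter (\<lambda>f. factor_span n f = s) fs)"

end

theory Submission
  imports Defs "HOL-Library.FuncSet"
begin


definition off :: "nat \<Rightarrow> nat \<Rightarrow> nat \<Rightarrow> nat" where
  "off n a i = (i + n - a) mod n"

lemma off_lt: "1 \<le> n \<Longrightarrow> off n a i < n"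
  unfolding off_def by simp

lemma off_gen: assumes "a < n" shows "off n a ((a + j) mod n) = j mod n"
proof -
  have "off n a ((a + j) mod n) = ((a + j) mod n + (n - a)) mod n"
    unfolding off_def using assms by (simp add: add.commute)
  also have "\<dots> = (a + j + (n - a)) mod n" by (simp add: mod_add_left_eq)
  also have "a + j + (n - a) = j + n" using assms by simp
  finally show ?thesis by simp
qed

lemma mod_off: assumes "a < n" "i < n" shows "(a + off n a i) mod n = i"
proof -
  have "(a + off n a i) mod n = (a + (i + n - a)) mod n"
    unfolding off_def by (simp add: mod_add_right_eq)
  also have "a + (i + n - a) = i + n" using assms by simp
  finally show ?thesis using assms by simp
qed

lemma off_shift: assumes "a < n" "b < n"
  shows "off n a ((b + j) mod n) = (off n a b + j) mod n"
proof -
  have "(b + j) mod n = (a + (off n a b + j)) mod n"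
    using mod_off[OF assms] by (metis add.assoc mod_add_left_eq)
  thus ?thesis using off_gen[OF assms(1)] by simp
qed

lemma off_self: "a < n \<Longrightarrow> off n a a = 0"
  unfolding off_def by simp

lemma off_zero_eq: assumes "a < n" "i < n" "off n a i = 0" shows "i = a"
  using mod_off[OF assms(1,2)] assms by simp

lemma mem_closed: assumes "a < n" "l < n"
  shows "i \<in> cint_closed n a l \<longleftrightarrow> i < n \<and> off n a i \<le> l"
proof
  assume "i \<in> cint_closed n a l"
  then obtain j where j: "j \<le> l" "i = (a + j) mod n" unfolding cint_closed_def by auto
  thus "i < n \<and> off n a i \<le> l" using off_gen[OF assms(1), of j] assms by auto
next
  assume h: "i < n \<and> off n a i \<le> l"
  hence "i = (a + off n a i) mod n \<and> off n a i \<le> l" using mod_off[OF assms(1)] by simp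
  thus "i \<in> cint_closed n a l" unfolding cint_closed_def by blast
qed

lemma mem_open: assumes "a < n" "l < n"
  shows "i \<in> cint_open n a l \<longleftrightarrow> i < n \<and> 1 \<le> off n a i \<and> off n a i \<le> l"
proof
  assume "i \<in> cint_open n a l"
  then obtain j where j: "1 \<le> j" "j \<le> l" "i = (a + j) mod n" unfolding cint_open_def by auto
  thus "i < n \<and> 1 \<le> off n a i \<and> off n a i \<le> l" using off_gen[OF assms(1), of j] assms by auto
next
  assume h: "i < n \<and> 1 \<le> off n a i \<and> off n a i \<le> l"
  hence "i = (a + off n a i) mod n \<and> 1 \<le> off n a i \<and> off n a i \<le> l" using mod_off[OF assms(1)] by simp
  thus "i \<in> cint_open n a l" unfolding cint_open_def by blast
qed

lemma closed_sub: "cint_closed n a l \<subseteq> {..<n}" if "1 \<le> n"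
  using that unfolding cint_closed_def by auto
lemma open_sub: "cint_open n a l \<subseteq> {..<n}" if "1 \<le> n"
  using that unfolding cint_open_def by auto

lemma self_not_open: "a < n \<Longrightarrow> l < n \<Longrightarrow> a \<notin> cint_open n a l"
  using mem_open off_self by fastforce

lemma closed_all: "a < n \<Longrightarrow> i < n \<Longrightarrow> i \<in> cint_closed n a (n - 1)"
  using mem_closed[of a n "n - 1" i] off_lt[of n a i] by auto

lemma open_all: "b < n \<Longrightarrow> i < n \<Longrightarrow> i \<noteq> b \<Longrightarrow> i \<in> cint_open n b (n - 1)"
  using mem_open[of b n "n - 1" i] off_lt[of n b i] off_zero_eq[of b n i] by fastforce

lemma closed_zero: "b < n \<Longrightarrow> cint_closed n b 0 = {b}"
  unfolding cint_closed_def by auto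

lemma open_zero: "cint_open n b 0 = {}"
  unfolding cint_open_def by auto

lemma succ_open: "1 \<le> m \<Longrightarrow> (b + 1) mod n \<in> cint_open n b m"
  unfolding cint_open_def by (auto intro!: exI[where x=1])

lemma ind_aux0:
  fixes l n t m j :: nat
  assumes "l < n - 1" "t \<le> l" "\<forall>j. 1 \<le> j \<and> j \<le> m \<longrightarrow> (t + j) mod n \<le> l"
  shows "j \<le> m \<Longrightarrow> t + j \<le> l"
proof (induction j)
  case 0 then show ?case using assms by simp
next
  case (Suc j)
  hence "t + j \<le> l" by simp
  hence "t + Suc j < n" using assms by simp
  moreover have "(t + Suc j) mod n \<le> l" using assms(3)[rule_format, of "Suc j"] Suc.prems by simp
  ultimately show ?case by simp
qed

lemma ind_aux:
  fixes l n t m :: nat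
  assumes "l < n - 1" "t \<le> l" "\<forall>j. 1 \<le> j \<and> j \<le> m \<longrightarrow> (t + j) mod n \<le> l"
  shows "\<forall>j \<le> m. t + j \<le> l"
  using ind_aux0[OF assms] by blast

lemma IL1: assumes "a < n" "b < n" "l < n - 1" "1 \<le> m" "m < n"
  "cint_open n b m \<subseteq> cint_open n a l"
  shows "cint_closed n b m \<subseteq> cint_closed n a l \<and> m \<le> l"
proof -
  let ?t = "off n a b"
  have l: "l < n" using assms by simp
  have key: "\<And>j. 1 \<le> j \<Longrightarrow> j \<le> m \<Longrightarrow> 1 \<le> (?t + j) mod n \<and> (?t + j) mod n \<le> l"
  proof -
    fix j assume "1 \<le> j" "j \<le> m"
    hence "(b + j) mod n \<in> cint_open n b m" unfolding cint_open_def by auto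
    hence "(b + j) mod n \<in> cint_open n a l" using assms by auto
    thus "1 \<le> (?t + j) mod n \<and> (?t + j) mod n \<le> l"
      using mem_open[OF assms(1) l] off_shift[OF assms(1,2)] by simp
  qed
  have tn: "?t < n" using off_lt assms by simp
  have "1 \<le> (?t + 1) mod n" using key[of 1] assms by simp
  hence "?t + 1 \<noteq> n" by auto
  hence "?t + 1 < n" using tn by simp
  hence "?t + 1 \<le> l" using key[of 1] assms by simp
  hence tl: "?t \<le> l" by simp
  have all: "\<forall>j \<le> m. ?t + j \<le> l" using ind_aux[OF assms(3) tl] key by blast
  show ?thesis
  proof
    show "cint_closed n b m \<subseteq> cint_closed n a l"
    proof
      fix i assume "i \<in> cint_closed n b m"
      then obtain j where "j \<le> m" "i = (b + j) mod n" unfolding cint_closed_def by auto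
      moreover have "?t + j < n" using all \<open>j \<le> m\<close> l by (meson le_less_trans)
      ultimately show "i \<in> cint_closed n a l"
        using mem_closed[OF assms(1) l] off_shift[OF assms(1,2)] all assms by auto
    qed
    show "m \<le> l" using all by auto
  qed
qed

lemma IL2: assumes "a < n" "b < n" "l < n - 1" "m < n"
  "cint_closed n b m \<subseteq> cint_closed n a l"
  shows "cint_open n b m \<subseteq> cint_open n a l"
proof -
  let ?t = "off n a b"
  have l: "l < n" using assms by simp
  have key: "\<And>j. j \<le> m \<Longrightarrow> (?t + j) mod n \<le> l"
  proof -
    fix j assume "j \<le> m"
    hence "(b + j) mod n \<in> cint_closed n b m" unfolding cint_closed_def by auto
    hence "(b + j) mod n \<in> cint_closed n a l" using assms by auto
    thus "(?t + j) mod n \<le> l"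
      using mem_closed[OF assms(1) l] off_shift[OF assms(1,2)] by simp
  qed
  have tn: "?t < n" using off_lt assms by simp
  have tl: "?t \<le> l" using key[of 0] tn by simp
  have all: "\<forall>j \<le> m. ?t + j \<le> l" using ind_aux[OF assms(3) tl] key by blast
  show ?thesis
  proof
    fix i assume "i \<in> cint_open n b m"
    then obtain j where "1 \<le> j" "j \<le> m" "i = (b + j) mod n" unfolding cint_open_def by auto
    moreover have "?t + j < n" using all \<open>j \<le> m\<close> l by (meson le_less_trans)
    ultimately show "i \<in> cint_open n a l"
      using mem_open[OF assms(1) l] off_shift[OF assms(1,2)] all assms by auto
  qed
qed

lemma IL3: assumes "a < n" "b < n" "l < n - 1"
  "cint_closed n b l \<subseteq> cint_closed n a l"
  shows "a = b"
proof -
  let ?t = "off n a b"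
  have l: "l < n" using assms by simp
  have key: "\<And>j. j \<le> l \<Longrightarrow> (?t + j) mod n \<le> l"
  proof -
    fix j assume "j \<le> l"
    hence "(b + j) mod n \<in> cint_closed n b l" unfolding cint_closed_def by auto
    hence "(b + j) mod n \<in> cint_closed n a l" using assms by auto
    thus "(?t + j) mod n \<le> l"
      using mem_closed[OF assms(1) l] off_shift[OF assms(1,2)] by simp
  qed
  have tn: "?t < n" using off_lt assms by simp
  have tl: "?t \<le> l" using key[of 0] tn by simp
  have all: "\<forall>j \<le> l. ?t + j \<le> l" using ind_aux[OF assms(3) tl] key by blast
  hence "?t = 0" by auto
  thus ?thesis using off_zero_eq[OF assms(1,2)] by simp
qed


lemma LE_sets: assumes "span_le n (Sp b m) (Sp a l)" "a < n" "b < n" "l < n" "m < n"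
  shows "cint_open n b m \<subseteq> cint_open n a l \<and> cint_closed n b m \<subseteq> cint_closed n a l"
proof -
  have n1: "1 \<le> n" using assms by simp
  from assms(1) have "(m \<le> l \<and> l < n - 1 \<and> cint_closed n b m \<subseteq> cint_closed n a l) \<or>
     (l = n - 1 \<and> cint_open n b m \<subseteq> cint_open n a l)" unfolding span_le_def by simp
  thus ?thesis
  proof
    assume h: "m \<le> l \<and> l < n - 1 \<and> cint_closed n b m \<subseteq> cint_closed n a l"
    thus ?thesis using IL2[OF assms(2,3) _ assms(5)] by blast
  next
    assume h: "l = n - 1 \<and> cint_open n b m \<subseteq> cint_open n a l"
    have "cint_closed n b m \<subseteq> cint_closed n a l"
      using h closed_all[OF assms(2)] closed_sub[OF n1] by blast
    thus ?thesis using h by blast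
  qed
qed

lemma span_le_antisym: assumes "is_span n s" "is_span n s'" "span_le n s s'" "span_le n s' s"
  shows "s = s'"
proof (cases s)
  case SEmpty thus ?thesis using assms(4) unfolding span_le_def by (cases s') auto
next
  case SFull thus ?thesis using assms(3) unfolding span_le_def by (cases s') auto
next
  case (Sp b m)
  note S1 = Sp
  show ?thesis
  proof (cases s')
    case SEmpty thus ?thesis using assms(3) S1 unfolding span_le_def by auto
  next
    case SFull thus ?thesis using assms(4) S1 unfolding span_le_def by auto
  next
    case (Sp a l)
    note Sp2 = Sp
    note Sp = S1
    have bn: "b < n" "m < n" "a < n" "l < n" using assms(1,2) Sp Sp2 unfolding is_span_def by auto
    have A: "(m \<le> l \<and> l < n - 1 \<and> cint_closed n b m \<subseteq> cint_closed n a l) \<or>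
     (l = n - 1 \<and> cint_open n b m \<subseteq> cint_open n a l)" using assms(3) Sp Sp2 unfolding span_le_def by simp
    have B: "(l \<le> m \<and> m < n - 1 \<and> cint_closed n a l \<subseteq> cint_closed n b m) \<or>
     (m = n - 1 \<and> cint_open n a l \<subseteq> cint_open n b m)" using assms(4) Sp Sp2 unfolding span_le_def by simp
    show ?thesis
    proof (cases "l = n - 1")
      case True
      with A B have m: "m = n - 1" by auto
      have "a = b"
      proof (rule ccontr)
        assume "a \<noteq> b"
        hence "a \<in> cint_open n b m" using open_all[of b n a] bn m by auto
        hence "a \<in> cint_open n a l" using A B True m by auto
        thus False using self_not_open bn by blast
      qed
      thus ?thesis using Sp Sp2 True m by simp
    next
      case False
      with A have A1: "m \<le> l \<and> l < n - 1 \<and> cint_closed n b m \<subseteq> cint_closed n a l" by auto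
      with B have B1: "l \<le> m \<and> m < n - 1 \<and> cint_closed n a l \<subseteq> cint_closed n b m" by auto
      have "l = m" using A1 B1 by simp
      hence "a = b" using IL3[of b n a l] bn A1 B1 by auto
      thus ?thesis using Sp Sp2 \<open>l = m\<close> by simp
    qed
  qed
qed

locale fctx =
  fixes n :: nat and fs :: "((nat \<Rightarrow> 'a::field) \<times> nat \<times> nat) list"
  assumes n1: "1 \<le> n"
    and wf: "\<forall>(al, a, l) \<in> set fs. a < n \<and> l \<le> n \<and> vec_has_span n al a l"
    and nz: "\<forall>(al, a, l) \<in> set fs. l = 0 \<longrightarrow> al a \<noteq> 0"
    and dist: "\<forall>j k. j < length fs \<longrightarrow> k < length fs \<longrightarrow> j \<noteq> k \<longrightarrow>
        snd (snd (fs ! j)) = 0 \<longrightarrow> snd (snd (fs ! k)) = 0 \<longrightarrow>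
        fst (snd (fs ! j)) \<noteq> fst (snd (fs ! k))"
begin

abbreviation "r \<equiv> length fs"
definition "fal k = fst (fs ! k)"
definition "fb k = fst (snd (fs ! k))"
definition "fm k = snd (snd (fs ! k))"
definition "act k i = active n (fb k) (fm k) i"
definition "fsp k = factor_span n (fs ! k)"

lemma fs_nth: "fs ! k = (fal k, fb k, fm k)"
  unfolding fal_def fb_def fm_def by simp

lemma fb_lt: "k < r \<Longrightarrow> fb k < n"
  using wf nth_mem[of k fs] fs_nth[of k] by fastforce
lemma fm_le: "k < r \<Longrightarrow> fm k \<le> n"
  using wf nth_mem[of k fs] fs_nth[of k] by fastforce
lemma fal_supp: "k < r \<Longrightarrow> fm k < n \<Longrightarrow> i < n \<Longrightarrow> fal k i \<noteq> 0 \<Longrightarrow> i \<in> cint_closed n (fb k) (fm k)"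
  using wf nth_mem[of k fs] fs_nth[of k] unfolding vec_has_span_def by fastforce
lemma fal_nz: "k < r \<Longrightarrow> fm k = 0 \<Longrightarrow> fal k (fb k) \<noteq> 0"
  using nz nth_mem[of k fs] fs_nth[of k] by fastforce
lemma fdist: "j < r \<Longrightarrow> k < r \<Longrightarrow> fm j = 0 \<Longrightarrow> fm k = 0 \<Longrightarrow> fb j = fb k \<Longrightarrow> j = k"
  using dist unfolding fm_def fb_def by blast
lemma fsp_eq: "fsp k = (if fm k = n then SFull else Sp (fb k) (fm k))"
  unfolding fsp_def factor_span_def using fs_nth[of k] by simp
lemma act_full: "fm k = n \<Longrightarrow> act k i"
  unfolding act_def active_def by simp
lemma act_part: "fm k \<noteq> n \<Longrightarrow> act k i \<longleftrightarrow> i \<in> cint_open n (fb k) (fm k)"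
  unfolding act_def active_def by simp

lemma fsp_span: "k < r \<Longrightarrow> is_span n (fsp k)"
  using fb_lt fm_le unfolding fsp_eq is_span_def by (auto simp: le_less)

lemma fsp_refl: "k < r \<Longrightarrow> span_le n (fsp k) (fsp k)"
  using fm_le[of k] unfolding fsp_eq span_le_def by (auto simp: le_less)

definition zc :: "span \<Rightarrow> (nat \<Rightarrow> 'a) \<Rightarrow> bool" where
  "zc s z = (case s of
      SEmpty \<Rightarrow> (\<forall>i<n. \<forall>k<r. act k i \<longrightarrow> z k = 0) \<and> (\<forall>i<n. (\<Sum>k<r. z k * fal k i) = 0)
    | SFull \<Rightarrow> True
    | Sp a l \<Rightarrow> (\<forall>i<n. i \<notin> cint_open n a l \<longrightarrow> (\<forall>k<r. act k i \<longrightarrow> z k = 0)) \<and>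
                (\<forall>i<n. i \<notin> cint_closed n a l \<longrightarrow> (\<Sum>k<r. z k * fal k i) = 0))"

lemma not_le_empty: "\<not> span_le n (fsp k) SEmpty"
  unfolding fsp_eq span_le_def by auto

lemma full_not_le_sp: "\<not> span_le n SFull (Sp a l)"
  unfolding span_le_def by auto

lemma sum_single:
  assumes "k < r" "\<And>k'. k' < r \<Longrightarrow> k' \<noteq> k \<Longrightarrow> z k' * fal k' i = 0"
  shows "(\<Sum>k<r. z k * fal k i) = z k * fal k i"
proof -
  have "(\<Sum>k<r. z k * fal k i) = z k * fal k i + (\<Sum>k\<in>{..<r} - {k}. z k * fal k i)"
    using assms(1) by (intro sum.remove) auto
  also have "(\<Sum>k\<in>{..<r} - {k}. z k * fal k i) = 0"
    using assms(2) by (intro sum.neutral) auto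
  finally show ?thesis by simp
qed

lemma zc_empty:
  assumes "zc SEmpty z" shows "\<forall>k<r. z k = 0"
proof -
  have V: "\<And>i k. i < n \<Longrightarrow> k < r \<Longrightarrow> act k i \<Longrightarrow> z k = 0"
   and L: "\<And>i. i < n \<Longrightarrow> (\<Sum>k<r. z k * fal k i) = 0" using assms unfolding zc_def by auto
  have pos: "z k = 0" if "k < r" "1 \<le> fm k" for k
  proof -
    have "act k ((fb k + 1) mod n)"
      using act_full act_part succ_open that by blast
    moreover have "(fb k + 1) mod n < n" using n1 by simp
    ultimately show ?thesis using V that by blast
  qed
  show ?thesis
  proof (intro allI impI)
    fix k assume k: "k < r"
    show "z k = 0"
    proof (cases "fm k = 0")
      case False thus ?thesis using pos k by simp
    next
      case True
      have "(\<Sum>j<r. z j * fal j (fb k)) = z k * fal k (fb k)"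
      proof (rule sum_single[where z=z and i="fb k", OF k])
        fix k' assume k': "k' < r" "k' \<noteq> k"
        show "z k' * fal k' (fb k) = 0"
        proof (rule ccontr)
          assume h: "z k' * fal k' (fb k) \<noteq> 0"
          hence "fm k' = 0" using pos k' by fastforce
          hence "fb k \<in> cint_closed n (fb k') 0" using fal_supp[of k' "fb k"] h k' fb_lt[OF k] n1 by auto
          hence "fb k = fb k'" using closed_zero fb_lt k' by auto
          thus False using fdist[of k k'] k k' True \<open>fm k' = 0\<close> by auto
        qed
      qed
      hence "z k * fal k (fb k) = 0" using L[of "fb k"] fb_lt[OF k] by simp
      thus ?thesis using fal_nz[OF k True] by simp
    qed
  qed
qed

lemma ZC:
  assumes "is_span n s" "\<forall>k\<ge>r. z k = 0"
  shows "zc s z \<longleftrightarrow> (\<forall>k<r. z k \<noteq> 0 \<longrightarrow> span_le n (fsp k) s)"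
proof (cases s)
  case SEmpty
  show ?thesis
  proof
    assume "zc s z" thus "\<forall>k<r. z k \<noteq> 0 \<longrightarrow> span_le n (fsp k) s" using zc_empty SEmpty by auto
  next
    assume "\<forall>k<r. z k \<noteq> 0 \<longrightarrow> span_le n (fsp k) s"
    hence "\<forall>k<r. z k = 0" using not_le_empty SEmpty by auto
    thus "zc s z" unfolding zc_def SEmpty by auto
  qed
next
  case SFull thus ?thesis unfolding zc_def span_le_def by auto
next
  case (Sp a l)
  have al: "a < n" "l < n" using assms Sp unfolding is_span_def by auto
  show ?thesis
  proof
    assume "zc s z"
    hence V: "\<And>i k. i < n \<Longrightarrow> i \<notin> cint_open n a l \<Longrightarrow> k < r \<Longrightarrow> act k i \<Longrightarrow> z k = 0"
      and L: "\<And>i. i < n \<Longrightarrow> i \<notin> cint_closed n a l \<Longrightarrow> (\<Sum>k<r. z k * fal k i) = 0"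
      unfolding zc_def Sp by auto
    have full0: "z k = 0" if "k < r" "fm k = n" for k
      using V[of a k] act_full[OF that(2)] self_not_open[OF al] al that by blast
    have mid: "cint_open n (fb k) (fm k) \<subseteq> cint_open n a l" if "k < r" "z k \<noteq> 0" "fm k \<noteq> n" for k
    proof
      fix i assume i: "i \<in> cint_open n (fb k) (fm k)"
      hence "i < n" using open_sub[OF n1] by auto
      thus "i \<in> cint_open n a l" using V[of i k] act_part[OF that(3)] i that by blast
    qed
    have midle: "span_le n (Sp (fb k) (fm k)) (Sp a l) \<and> cint_closed n (fb k) (fm k) \<subseteq> cint_closed n a l"
      if "k < r" "z k \<noteq> 0" "1 \<le> fm k" for k
    proof -
      have mn: "fm k \<noteq> n" using full0 that by auto
      hence mlt: "fm k < n" using fm_le[OF that(1)] by simp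
      have O: "cint_open n (fb k) (fm k) \<subseteq> cint_open n a l" using mid that mn by blast
      show ?thesis
      proof (cases "l = n - 1")
        case True
        have "cint_closed n (fb k) (fm k) \<subseteq> cint_closed n a l"
          using True closed_all[OF al(1)] closed_sub[OF n1] by blast
        thus ?thesis using True O unfolding span_le_def by simp
      next
        case False
        hence "l < n - 1" using al by simp
        from IL1[OF al(1) fb_lt[OF that(1)] this that(3) mlt O]
        show ?thesis using \<open>l < n - 1\<close> unfolding span_le_def by simp
      qed
    qed
    have zero: "fb k \<in> cint_closed n a l" if "k < r" "z k \<noteq> 0" "fm k = 0" for k
    proof (rule ccontr)
      assume nb: "fb k \<notin> cint_closed n a l"
      have "(\<Sum>j<r. z j * fal j (fb k)) = z k * fal k (fb k)"
      proof (rule sum_single[where z=z and i="fb k", OF that(1)])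
        fix k' assume k': "k' < r" "k' \<noteq> k"
        show "z k' * fal k' (fb k) = 0"
        proof (rule ccontr)
          assume h: "z k' * fal k' (fb k) \<noteq> 0"
          have mn: "fm k' \<noteq> n" using full0 k' h by auto
          hence mlt: "fm k' < n" using fm_le[OF k'(1)] by simp
          have inb: "fb k \<in> cint_closed n (fb k') (fm k')"
            using fal_supp[OF k'(1) mlt _] h fb_lt[OF that(1)] by auto
          show False
          proof (cases "fm k' = 0")
            case True
            hence "fb k = fb k'" using inb closed_zero fb_lt k' by auto
            thus False using fdist[of k k'] that k' True by auto
          next
            case False
            hence "cint_closed n (fb k') (fm k') \<subseteq> cint_closed n a l" using midle k' h by auto
            thus False using inb nb by auto
          qed
        qed
      qed
      hence "z k * fal k (fb k) = 0" using L[of "fb k"] fb_lt[OF that(1)] nb by simp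
      thus False using fal_nz[OF that(1,3)] that by simp
    qed
    show "\<forall>k<r. z k \<noteq> 0 \<longrightarrow> span_le n (fsp k) s"
    proof (intro allI impI)
      fix k assume k: "k < r" "z k \<noteq> 0"
      have mn: "fm k \<noteq> n" using full0 k by auto
      show "span_le n (fsp k) s"
      proof (cases "fm k = 0")
        case True
        have "fb k \<in> cint_closed n a l" using zero k True by blast
        hence "span_le n (Sp (fb k) 0) (Sp a l)"
          unfolding span_le_def using closed_zero[OF fb_lt[OF k(1)]] open_zero al by auto
        thus ?thesis using True mn Sp unfolding fsp_eq by simp
      next
        case False
        thus ?thesis using midle[of k] k mn Sp unfolding fsp_eq by simp
      qed
    qed
  next
    assume R: "\<forall>k<r. z k \<noteq> 0 \<longrightarrow> span_le n (fsp k) s"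
    have sets: "fm k \<noteq> n \<and> cint_open n (fb k) (fm k) \<subseteq> cint_open n a l \<and>
        cint_closed n (fb k) (fm k) \<subseteq> cint_closed n a l" if "k < r" "z k \<noteq> 0" for k
    proof -
      have le: "span_le n (fsp k) (Sp a l)" using R that Sp by auto
      hence mn: "fm k \<noteq> n" using full_not_le_sp unfolding fsp_eq by (auto split: if_splits)
      hence mlt: "fm k < n" using fm_le[OF that(1)] by simp
      have "span_le n (Sp (fb k) (fm k)) (Sp a l)" using le mn unfolding fsp_eq by simp
      from LE_sets[OF this al(1) fb_lt[OF that(1)] al(2) mlt] show ?thesis using mn by simp
    qed
    show "zc s z" unfolding zc_def Sp
    proof (simp, intro conjI allI impI)
      fix i k assume h: "i < n" "i \<notin> cint_open n a l" "k < r" "act k i"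
      show "z k = 0"
      proof (rule ccontr)
        assume "z k \<noteq> 0"
        from sets[OF h(3) this] have "i \<in> cint_open n a l" using act_part h by blast
        thus False using h by simp
      qed
    next
      fix i assume h: "i < n" "i \<notin> cint_closed n a l"
      show "(\<Sum>k<r. z k * fal k i) = 0"
      proof (rule sum.neutral, intro ballI)
        fix k assume k: "k \<in> {..<r}"
        show "z k * fal k i = 0"
        proof (rule ccontr)
          assume "z k * fal k i \<noteq> 0"
          with sets[of k] k have "fm k \<noteq> n" "cint_closed n (fb k) (fm k) \<subseteq> cint_closed n a l" "fal k i \<noteq> 0"
            by auto
          moreover have "fm k < n" using calculation fm_le[of k] k by simp
          ultimately have "i \<in> cint_closed n a l" using fal_supp[of k i] k h by auto
          thus False using h by simp
        qed
      qed
    qed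
  qed
qed

lemma zc_mono:
  assumes "is_span n s'" "is_span n s" "span_le n s' s" "zc s' z"
  shows "zc s z"
proof (cases s')
  case SEmpty
  thus ?thesis using assms(4) unfolding zc_def by (cases s) auto
next
  case SFull
  hence "s = SFull" using assms(3) unfolding span_le_def by (cases s) auto
  thus ?thesis unfolding zc_def by simp
next
  case (Sp a' l')
  note S1 = Sp
  show ?thesis
  proof (cases s)
    case SEmpty thus ?thesis using assms(3) S1 unfolding span_le_def by auto
  next
    case SFull thus ?thesis unfolding zc_def by simp
  next
    case (Sp a l)
    note Sp2 = Sp
    note Sp = S1
    have b: "a' < n" "l' < n" "a < n" "l < n" using assms(1,2) Sp Sp2 unfolding is_span_def by auto
    from LE_sets[of n a' l' a l] assms(3) Sp Sp2 b
    have "cint_open n a' l' \<subseteq> cint_open n a l \<and> cint_closed n a' l' \<subseteq> cint_closed n a l" by simp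
    thus ?thesis using assms(4) Sp Sp2 unfolding zc_def by auto
  qed
qed

definition "unitv k = (\<lambda>j. if j = k then (1::'a) else 0)"

lemma fsp_trans:
  assumes "k < r" "is_span n s'" "is_span n s" "span_le n (fsp k) s'" "span_le n s' s"
  shows "span_le n (fsp k) s"
proof -
  have z: "\<forall>j\<ge>r. unitv k j = 0" using assms(1) unfolding unitv_def by auto
  have "zc s' (unitv k)" using ZC[OF assms(2) z] assms(4) unfolding unitv_def by auto
  hence "zc s (unitv k)" using zc_mono assms by blast
  thus ?thesis using ZC[OF assms(3) z] assms(1) unfolding unitv_def by auto
qed

lemma Q_iff:
  assumes "k < r" "is_span n s"
  shows "(\<exists>s'. is_span n s' \<and> span_le n s' s \<and> s' \<noteq> s \<and> span_le n (fsp k) s')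
     \<longleftrightarrow> span_le n (fsp k) s \<and> fsp k \<noteq> s"
proof
  assume "\<exists>s'. is_span n s' \<and> span_le n s' s \<and> s' \<noteq> s \<and> span_le n (fsp k) s'"
  then obtain s' where s': "is_span n s'" "span_le n s' s" "s' \<noteq> s" "span_le n (fsp k) s'" by blast
  have le: "span_le n (fsp k) s" using fsp_trans[OF assms(1) s'(1) assms(2) s'(4,2)] .
  moreover have "fsp k \<noteq> s"
  proof
    assume "fsp k = s"
    hence "s' = s" using span_le_antisym[OF s'(1) assms(2) s'(2)] s'(4) by simp
    thus False using s' by simp
  qed
  ultimately show "span_le n (fsp k) s \<and> fsp k \<noteq> s" by simp
next
  assume "span_le n (fsp k) s \<and> fsp k \<noteq> s"
  thus "\<exists>s'. is_span n s' \<and> span_le n s' s \<and> s' \<noteq> s \<and> span_le n (fsp k) s'"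
    using fsp_span[OF assms(1)] fsp_refl[OF assms(1)] by blast
qed

end


context vector_space begin

lemma card_span_indep:
  assumes fin: "finite (UNIV :: 'a set)" and "finite B" "independent B"
  shows "card (span B) = card (UNIV :: 'a set) ^ card B"
  using assms(2,3)
proof (induction B rule: finite_induct)
  case empty thus ?case by simp
next
  case (insert b B)
  have indB: "independent B" and nb: "b \<notin> span B"
    using insert.prems insert.hyps independent_insert[of b B] by auto
  have IH: "card (span B) = card (UNIV :: 'a set) ^ card B" using insert.IH indB by simp
  let ?h = "\<lambda>(c, y). c *s b + y"
  have img: "?h ` (UNIV \<times> span B) = span (insert b B)"
  proof
    show "?h ` (UNIV \<times> span B) \<subseteq> span (insert b B)"
    proof
      fix x assume "x \<in> ?h ` (UNIV \<times> span B)"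
      then obtain c y where "x = c *s b + y" "y \<in> span B" by auto
      hence "x - c *s b \<in> span B" by simp
      thus "x \<in> span (insert b B)" using span_breakdown_eq[of x b B] by auto
    qed
  next
    show "span (insert b B) \<subseteq> ?h ` (UNIV \<times> span B)"
    proof
      fix x assume "x \<in> span (insert b B)"
      then obtain k where k: "x - k *s b \<in> span B" using span_breakdown_eq by blast
      have "x = ?h (k, x - k *s b)" by simp
      thus "x \<in> ?h ` (UNIV \<times> span B)" using k by blast
    qed
  qed
  have inj: "inj_on ?h (UNIV \<times> span B)"
  proof (rule inj_onI, clarsimp)
    fix c y c' y' assume y: "y \<in> span B" "y' \<in> span B" and eq: "c *s b + y = c' *s b + y'"
    have "(c - c') *s b = y' - y" using eq by (simp add: algebra_simps)
    hence "(c - c') *s b \<in> span B" using span_diff y by simp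
    show "c = c' \<and> y = y'"
    proof (cases "c = c'")
      case True thus ?thesis using eq by simp
    next
      case False
      hence "inverse (c - c') *s ((c - c') *s b) \<in> span B"
        using span_scale \<open>(c - c') *s b \<in> span B\<close> by blast
      hence "b \<in> span B" using False by simp
      thus ?thesis using nb by simp
    qed
  qed
  have "card (span (insert b B)) = card ((UNIV :: 'a set) \<times> span B)"
    using card_image[OF inj] img by simp
  also have "\<dots> = card (UNIV :: 'a set) * card (span B)" by (simp add: card_cartesian_product)
  finally show ?case using IH insert.hyps by simp
qed

lemma card_subspace:
  assumes fin: "finite (UNIV :: 'a set)" and "subspace W" "finite W"
  shows "card W = card (UNIV :: 'a set) ^ dim W"
proof -
  obtain B where B: "B \<subseteq> W" "independent B" "W \<subseteq> span B" "card B = dim W"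
    using basis_exists by blast
  have "span B = W" using span_subspace B assms by blast
  moreover have "finite B" using B assms finite_subset by blast
  ultimately show ?thesis using card_span_indep[OF fin _ B(2)] B by simp
qed

lemma dim_from_card:
  assumes fin: "finite (UNIV :: 'a set)" and "subspace W" "finite W" "card W = card (UNIV :: 'a set) ^ d"
  shows "dim W = d"
proof -
  have "card (UNIV :: 'a set) \<ge> 2"
  proof -
    have "card {0::'a, 1} = 2" by simp
    thus ?thesis using card_mono[OF fin, of "{0::'a,1}"] by simp
  qed
  moreover have "card (UNIV :: 'a set) ^ dim W = card (UNIV :: 'a set) ^ d" using card_subspace assms by simp
  ultimately show ?thesis using power_inject_exp by (metis one_less_numeral_iff order_less_le_trans semiring_norm(76))
qed

end

definition CP :: "nat \<Rightarrow> (nat \<Rightarrow> bool) \<Rightarrow> (nat \<Rightarrow> 'a::zero) set" where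
  "CP r P = {z. \<forall>k. z k \<noteq> 0 \<longrightarrow> k < r \<and> P k}"

lemma CP_bij:
  fixes P :: "nat \<Rightarrow> bool"
  shows "bij_betw (\<lambda>z. restrict z {k. k < r \<and> P k}) (CP r P :: (nat \<Rightarrow> 'a::zero) set)
     (PiE {k. k < r \<and> P k} (\<lambda>_. UNIV))"
proof -
  let ?K = "{k. k < r \<and> P k}"
  show ?thesis
  proof (rule bij_betwI')
    fix x y :: "nat \<Rightarrow> 'a" assume "x \<in> CP r P" "y \<in> CP r P"
    hence x: "\<And>k. k \<notin> ?K \<Longrightarrow> x k = 0" and y: "\<And>k. k \<notin> ?K \<Longrightarrow> y k = 0"
      unfolding CP_def by auto
    show "(restrict x ?K = restrict y ?K) = (x = y)"
    proof
      assume h: "restrict x ?K = restrict y ?K"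
      show "x = y"
      proof
        fix k show "x k = y k"
        proof (cases "k \<in> ?K")
          case True thus ?thesis using fun_cong[OF h, of k] by simp
        next
          case False thus ?thesis using x y by simp
        qed
      qed
    qed simp
  next
    fix x assume "x \<in> CP r P" thus "restrict x ?K \<in> PiE ?K (\<lambda>_. UNIV)" by simp
  next
    fix e :: "nat \<Rightarrow> 'a" assume e: "e \<in> PiE ?K (\<lambda>_. UNIV)"
    let ?z = "\<lambda>k. if k \<in> ?K then e k else 0"
    have "?z \<in> CP r P" unfolding CP_def by auto
    moreover have "e = restrict ?z ?K" using e by (auto simp: restrict_def fun_eq_iff PiE_def extensional_def)
    ultimately show "\<exists>x\<in>CP r P. e = restrict x ?K" by blast
  qed
qed

lemma card_CP: "card (CP r P :: (nat \<Rightarrow> 'a::{zero,finite}) set) = card (UNIV :: 'a set) ^ card {k. k < r \<and> P k}"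
proof -
  have "card (CP r P :: (nat \<Rightarrow> 'a) set) = card (PiE {k. k < r \<and> P k} (\<lambda>_. UNIV :: 'a set))"
    using bij_betw_same_card[OF CP_bij] by blast
  also have "\<dots> = card (UNIV :: 'a set) ^ card {k. k < r \<and> P k}" by (simp add: card_PiE)
  finally show ?thesis .
qed

lemma finite_CP: "finite (CP r P :: (nat \<Rightarrow> 'a::{zero,finite}) set)"
  using bij_betw_finite[OF CP_bij[where 'a='a and r=r and P=P]] by (simp add: finite_PiE)

lemma cyc_vs: assumes "vector_space sc" shows "vector_space (cyc_scale sc)"
proof -
  interpret vector_space sc by fact
  show ?thesis
    by unfold_locales (auto simp: cyc_scale_def scale_right_distrib scale_left_distrib
        algebra_simps prod_eq_iff fun_eq_iff)
qed


lemma nxt_lt: "1 \<le> n \<Longrightarrow> nxt n i < n"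
  unfolding nxt_def by simp

locale setting = fctx n fs
  for n and fs :: "((nat \<Rightarrow> 'a::{finite,field}) \<times> nat \<times> nat) list" +
  fixes sc :: "'a \<Rightarrow> 'v::ab_group_add \<Rightarrow> 'v" and V :: "nat \<Rightarrow> 'v set"
    and E :: "nat \<Rightarrow> ('v \<times> 'a \<times> 'v) set"
  assumes vs: "vector_space sc" and lt: "linear_trellis sc n V E"
    and teq: "trellis_equiv n V E (prodV (map (\<lambda>(al, a, l). elemV n a l) fs))
                  (prodE (map (\<lambda>(al, a, l). elemE n al a l) fs))"
begin

interpretation S: vector_space sc by (rule vs)
interpretation C: vector_space "cyc_scale sc" by (rule cyc_vs[OF vs])

definition "V' = prodV (map (\<lambda>(al, a, l). elemV n a l) fs)"
definition "E' = prodE (map (\<lambda>(al, a, l). elemE n al a l) fs)"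
definition "isf f = ((\<forall>i<n. bij_betw (f i) (V i) (V' i)) \<and>
          (\<forall>i<n. \<forall>x\<in>V i. \<forall>y\<in>V (nxt n i). \<forall>a.
              (x, a, y) \<in> E i \<longleftrightarrow> (f i x, a, f (nxt n i) y) \<in> E' i))"
definition "ff = (SOME f. isf f)"

lemma ff_isf: "isf ff"
proof -
  obtain f0 where "isf f0" using teq unfolding trellis_equiv_def isf_def V'_def E'_def by blast
  thus ?thesis unfolding ff_def by (rule someI[where P=isf])
qed

lemma ff: "(\<forall>i<n. bij_betw (ff i) (V i) (V' i)) \<and>
          (\<forall>i<n. \<forall>x\<in>V i. \<forall>y\<in>V (nxt n i). \<forall>a.
              (x, a, y) \<in> E i \<longleftrightarrow> (ff i x, a, ff (nxt n i) y) \<in> E' i)"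
  using ff_isf unfolding isf_def .

lemma ff_bij: "i < n \<Longrightarrow> bij_betw (ff i) (V i) (V' i)" using ff by blast
lemma ff_edge: "i < n \<Longrightarrow> x \<in> V i \<Longrightarrow> y \<in> V (nxt n i) \<Longrightarrow>
    (x, a, y) \<in> E i \<longleftrightarrow> (ff i x, a, ff (nxt n i) y) \<in> E' i" using ff by blast

definition "gg i = inv_into (V i) (ff i)"
definition "uu k i = (if act k i then (1::'a) else 0)"
definition "pv x i = map (\<lambda>k. x k * uu k i) [0..<r]"
definition "pl x i = (\<Sum>k<r. x k * fal k i)"
definition "Phi x = ((\<lambda>i. if i < n then gg i (pv x i) else 0), (\<lambda>i. if i < n then pl x i else 0))"
definition "BB = (CP r (\<lambda>_. True) :: (nat \<Rightarrow> 'a) set)"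

lemma gg: assumes "i < n" "xs \<in> V' i" shows "gg i xs \<in> V i" "ff i (gg i xs) = xs"
proof -
  have img: "ff i ` V i = V' i" using ff_bij[OF assms(1)] by (simp add: bij_betw_def)
  show "gg i xs \<in> V i" unfolding gg_def using assms(2) img by (metis inv_into_into)
  show "ff i (gg i xs) = xs" unfolding gg_def using assms(2) img by (metis f_inv_into_f)
qed

lemma gg_inj: assumes "i < n" "xs \<in> V' i" "ys \<in> V' i" shows "gg i xs = gg i ys \<longleftrightarrow> xs = ys"
  using gg[OF assms(1,2)] gg[OF assms(1,3)] by metis

lemma gg_ff: assumes "i < n" "v \<in> V i" shows "gg i (ff i v) = v"
  unfolding gg_def using ff_bij[OF assms(1)] assms(2) by (simp add: bij_betw_def inv_into_f_f)

lemma ff_in: assumes "i < n" "v \<in> V i" shows "ff i v \<in> V' i"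
  using ff_bij[OF assms(1)] assms(2) by (auto simp: bij_betw_def)

lemma mapV_nth: "(case fs ! k of (al, a, l) \<Rightarrow> elemV n a l) = elemV n (fb k) (fm k)"
  using fs_nth[of k] by simp
lemma mapE_nth: "(case fs ! k of (al, a, l) \<Rightarrow> elemE n al a l) = elemE n (fal k) (fb k) (fm k)"
  using fs_nth[of k] by simp

lemma elemV_mem: "p \<in> (elemV n (fb k) (fm k) i :: 'a set) \<longleftrightarrow> act k i \<or> p = 0"
  unfolding elemV_def act_def by auto

lemma elemE_mem: "(p, \<beta>, q) \<in> elemE n (fal k) (fb k) (fm k) i \<longleftrightarrow>
    (\<exists>c. p = c * uu k i \<and> \<beta> = c * fal k i \<and> q = c * uu k (nxt n i))"
  unfolding elemE_def uu_def act_def Let_def by auto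

lemma V'_mem: "xs \<in> V' i \<longleftrightarrow> length xs = r \<and> (\<forall>k<r. act k i \<or> xs ! k = 0)"
  unfolding V'_def prodV_def by (auto simp: mapV_nth elemV_def act_def)

lemma E'_mem: "(xs, \<beta>, ys) \<in> E' i \<longleftrightarrow> (\<exists>bs. length xs = r \<and> length bs = r \<and> length ys = r \<and>
    \<beta> = sum_list bs \<and> (\<forall>k<r. \<exists>c. xs ! k = c * uu k i \<and> bs ! k = c * fal k i \<and> ys ! k = c * uu k (nxt n i)))"
  unfolding E'_def prodE_def by (simp add: mapE_nth elemE_mem) blast

lemma pv_in: "pv x i \<in> V' i"
  unfolding V'_mem pv_def uu_def by auto

lemma pl_sum_list: "pl x i = sum_list (map (\<lambda>k. x k * fal k i) [0..<r])"
  unfolding pl_def using sum_set_upt_conv_sum_list_nat[of "\<lambda>k. x k * fal k i" 0 r]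
  by (simp add: atLeast0LessThan)

lemma pv_E: "(pv x i, pl x i, pv x (nxt n i)) \<in> E' i"
  unfolding E'_mem
  by (rule exI[of _ "map (\<lambda>k. x k * fal k i) [0..<r]"]) (auto simp: pv_def pl_sum_list)

lemma V_sub: "i < n \<Longrightarrow> E i \<subseteq> V i \<times> UNIV \<times> V (nxt n i)"
  using lt unfolding linear_trellis_def is_trellis_def by blast
lemma V_fin: "i < n \<Longrightarrow> finite (V i)"
  using lt unfolding linear_trellis_def is_trellis_def by blast
lemma E_zero: "i < n \<Longrightarrow> (0, 0, 0) \<in> E i"
  using lt unfolding linear_trellis_def by blast
lemma E_add: "i < n \<Longrightarrow> (x, a, y) \<in> E i \<Longrightarrow> (x', a', y') \<in> E i \<Longrightarrow> (x + x', a + a', y + y') \<in> E i"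
  using lt unfolding linear_trellis_def by blast
lemma E_scale: "i < n \<Longrightarrow> (x, a, y) \<in> E i \<Longrightarrow> (sc c x, c * a, sc c y) \<in> E i"
  using lt unfolding linear_trellis_def by blast

lemma Phi_cyc: "Phi x \<in> cycles n V E"
proof -
  have "(gg i (pv x i), pl x i, gg (nxt n i) (pv x (nxt n i))) \<in> E i" if i: "i < n" for i
  proof -
    have ni: "nxt n i < n" using nxt_lt n1 by simp
    show ?thesis
      using ff_edge[OF i gg(1)[OF i pv_in] gg(1)[OF ni pv_in]] gg(2)[OF i pv_in] gg(2)[OF ni pv_in] pv_E
      by simp
  qed
  thus ?thesis unfolding cycles_def Phi_def using nxt_lt n1 by auto
qed

lemma pv_eq: "pv x i = pv y i \<longleftrightarrow> (\<forall>k<r. act k i \<longrightarrow> x k = y k)"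
  unfolding pv_def map_eq_conv uu_def by auto

lemma pl_diff: "pl x i - pl y i = pl (x - y) i"
  unfolding pl_def by (simp add: sum_subtractf[symmetric] left_diff_distrib)

lemma cyc_mem: "(v, al) \<in> cycles n V E \<longleftrightarrow> (\<forall>i<n. (v i, al i, v (nxt n i)) \<in> E i) \<and> (\<forall>i\<ge>n. v i = 0 \<and> al i = 0)"
  unfolding cycles_def by simp

lemma cyc_sub: "C.subspace (cycles n V E)"
proof (rule C.subspaceI)
  have "(0, 0) \<in> cycles n V E" unfolding cyc_mem using E_zero by simp
  thus "0 \<in> cycles n V E" by (simp add: zero_prod_def)
next
  fix x y assume xy: "x \<in> cycles n V E" "y \<in> cycles n V E"
  obtain v al w be where x: "x = (v, al)" and y: "y = (w, be)" by (cases x, cases y) auto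
  have X: "(\<forall>i<n. (v i, al i, v (nxt n i)) \<in> E i) \<and> (\<forall>i\<ge>n. v i = 0 \<and> al i = 0)"
    using xy(1) x cyc_mem by simp
  have Y: "(\<forall>i<n. (w i, be i, w (nxt n i)) \<in> E i) \<and> (\<forall>i\<ge>n. w i = 0 \<and> be i = 0)"
    using xy(2) y cyc_mem by simp
  have "(v + w, al + be) \<in> cycles n V E" unfolding cyc_mem
  proof (intro conjI allI impI)
    fix i assume "i < n"
    thus "((v + w) i, (al + be) i, (v + w) (nxt n i)) \<in> E i"
      using E_add[of i "v i" "al i" "v (nxt n i)" "w i" "be i" "w (nxt n i)"] X Y by simp
  next
    fix i assume "n \<le> i"
    thus "(v + w) i = 0" using X Y by simp
  next
    fix i assume "n \<le> i"
    thus "(al + be) i = 0" using X Y by simp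
  qed
  thus "x + y \<in> cycles n V E" using x y by simp
next
  fix c x assume xc: "x \<in> cycles n V E"
  obtain v al where x: "x = (v, al)" by (cases x) auto
  have X: "(\<forall>i<n. (v i, al i, v (nxt n i)) \<in> E i) \<and> (\<forall>i\<ge>n. v i = 0 \<and> al i = 0)"
    using xc x cyc_mem by simp
  have "((\<lambda>i. sc c (v i)), (\<lambda>i. c * al i)) \<in> cycles n V E" unfolding cyc_mem
  proof (intro conjI allI impI)
    fix i assume "i < n"
    thus "(sc c (v i), c * al i, sc c (v (nxt n i))) \<in> E i"
      using E_scale[of i "v i" "al i" "v (nxt n i)" c] X by simp
  next
    fix i assume "n \<le> i"
    thus "sc c (v i) = 0" using X by simp
  next
    fix i assume "n \<le> i"
    thus "c * al i = 0" using X by simp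
  qed
  thus "cyc_scale sc c x \<in> cycles n V E" using x unfolding cyc_scale_def by simp
qed

lemma cspan_sub: "C.subspace (cycles_span n V E s)"
proof (rule C.subspaceI)
  show "0 \<in> cycles_span n V E s" unfolding cycles_span_def using C.subspace_0[OF cyc_sub]
    by (cases s) (auto simp: cycle_has_span_def zero_prod_def)
next
  fix x y assume xy: "x \<in> cycles_span n V E s" "y \<in> cycles_span n V E s"
  have "cycle_has_span n s (x + y)"
  proof (cases s)
    case SEmpty thus ?thesis using xy by (simp add: cycles_span_def cycle_has_span_def)
  next
    case SFull thus ?thesis by (simp add: cycle_has_span_def)
  next
    case (Sp a l)
    have "(\<forall>i<n. fst x i \<noteq> 0 \<longrightarrow> i \<in> cint_open n a l) \<and> (\<forall>i<n. snd x i \<noteq> 0 \<longrightarrow> i \<in> cint_closed n a l)"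
         "(\<forall>i<n. fst y i \<noteq> 0 \<longrightarrow> i \<in> cint_open n a l) \<and> (\<forall>i<n. snd y i \<noteq> 0 \<longrightarrow> i \<in> cint_closed n a l)"
      using xy Sp by (simp_all add: cycles_span_def cycle_has_span_def)
    hence "(\<forall>i<n. fst x i + fst y i \<noteq> 0 \<longrightarrow> i \<in> cint_open n a l) \<and>
       (\<forall>i<n. snd x i + snd y i \<noteq> 0 \<longrightarrow> i \<in> cint_closed n a l)"
      by (metis add.right_neutral add_0)
    thus ?thesis using Sp by (simp add: cycle_has_span_def)
  qed
  thus "x + y \<in> cycles_span n V E s" using xy C.subspace_add[OF cyc_sub] unfolding cycles_span_def by blast
next
  fix c x assume x: "x \<in> cycles_span n V E s"
  have "cycle_has_span n s (cyc_scale sc c x)"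
  proof (cases s)
    case SEmpty thus ?thesis using x
      by (simp add: cycles_span_def cycle_has_span_def cyc_scale_def zero_fun_def)
  next
    case SFull thus ?thesis by (simp add: cycle_has_span_def)
  next
    case (Sp a l)
    have "(\<forall>i<n. fst x i \<noteq> 0 \<longrightarrow> i \<in> cint_open n a l) \<and> (\<forall>i<n. snd x i \<noteq> 0 \<longrightarrow> i \<in> cint_closed n a l)"
      using x Sp by (simp_all add: cycles_span_def cycle_has_span_def)
    hence "(\<forall>i<n. sc c (fst x i) \<noteq> 0 \<longrightarrow> i \<in> cint_open n a l) \<and>
       (\<forall>i<n. c * snd x i \<noteq> 0 \<longrightarrow> i \<in> cint_closed n a l)"
      by (metis S.scale_zero_right mult_zero_right)
    thus ?thesis using Sp by (simp add: cycle_has_span_def cyc_scale_def)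
  qed
  thus "cyc_scale sc c x \<in> cycles_span n V E s" using x C.subspace_scale[OF cyc_sub] unfolding cycles_span_def by blast
qed

lemma Phi_fst: "i < n \<Longrightarrow> fst (Phi x) i = fst (Phi y) i \<longleftrightarrow> (\<forall>k<r. act k i \<longrightarrow> x k = y k)"
  unfolding Phi_def using gg_inj[OF _ pv_in pv_in] pv_eq by simp

lemma Phi_diff_span:
  assumes "is_span n s"
  shows "Phi x - Phi y \<in> cycles_span n V E s \<longleftrightarrow> zc s (x - y)"
proof -
  have cyc: "Phi x - Phi y \<in> cycles n V E" using C.subspace_diff[OF cyc_sub Phi_cyc Phi_cyc] .
  have F: "fst (Phi x - Phi y) i = 0 \<longleftrightarrow> (\<forall>k<r. act k i \<longrightarrow> (x - y) k = 0)" if "i < n" for i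
    using Phi_fst[OF that, of x y] by simp
  have L: "snd (Phi x - Phi y) i = (\<Sum>k<r. (x - y) k * fal k i)" if "i < n" for i
  proof -
    have "snd (Phi x - Phi y) i = pl x i - pl y i" using that unfolding Phi_def by simp
    thus ?thesis using pl_diff[of x i y] unfolding pl_def by simp
  qed
  have F0: "fst (Phi x - Phi y) i = 0" "snd (Phi x - Phi y) i = 0" if "\<not> i < n" for i
    using that unfolding Phi_def by simp_all
  have "cycle_has_span n s (Phi x - Phi y) \<longleftrightarrow> zc s (x - y)"
  proof (cases s)
    case SEmpty
    have "Phi x - Phi y = (0, 0) \<longleftrightarrow> (\<forall>i. fst (Phi x - Phi y) i = 0 \<and> snd (Phi x - Phi y) i = 0)"
      by (simp add: prod_eq_iff fun_eq_iff) blast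
    also have "\<dots> \<longleftrightarrow> (\<forall>i<n. fst (Phi x - Phi y) i = 0 \<and> snd (Phi x - Phi y) i = 0)"
      using F0 by blast
    also have "\<dots> \<longleftrightarrow> (\<forall>i<n. (\<forall>k<r. act k i \<longrightarrow> (x - y) k = 0) \<and> (\<Sum>k<r. (x - y) k * fal k i) = 0)"
      using F L by simp
    also have "\<dots> \<longleftrightarrow> zc s (x - y)"
      unfolding zc_def SEmpty by auto
    finally show ?thesis unfolding cycle_has_span_def SEmpty by simp
  next
    case SFull thus ?thesis unfolding cycle_has_span_def zc_def by simp
  next
    case (Sp a l)
    have "cycle_has_span n s (Phi x - Phi y) \<longleftrightarrow>
       (\<forall>i<n. fst (Phi x - Phi y) i \<noteq> 0 \<longrightarrow> i \<in> cint_open n a l) \<and>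
       (\<forall>i<n. snd (Phi x - Phi y) i \<noteq> 0 \<longrightarrow> i \<in> cint_closed n a l)"
      unfolding cycle_has_span_def Sp by simp
    also have "\<dots> \<longleftrightarrow> (\<forall>i<n. \<not> (\<forall>k<r. act k i \<longrightarrow> (x - y) k = 0) \<longrightarrow> i \<in> cint_open n a l) \<and>
       (\<forall>i<n. (\<Sum>k<r. (x - y) k * fal k i) \<noteq> 0 \<longrightarrow> i \<in> cint_closed n a l)"
      using F L by simp
    also have "\<dots> \<longleftrightarrow> zc s (x - y)"
      unfolding zc_def Sp span.case by blast
    finally show ?thesis .
  qed
  thus ?thesis unfolding cycles_span_def using cyc by simp
qed

end


lemma closed_cases: assumes "b < n" "i \<in> cint_closed n b m" shows "i = b \<or> i \<in> cint_open n b m"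
proof -
  obtain j where j: "j \<le> m" "i = (b + j) mod n" using assms(2) unfolding cint_closed_def by auto
  show ?thesis
  proof (cases "j = 0")
    case True thus ?thesis using j assms(1) by simp
  next
    case False thus ?thesis using j unfolding cint_open_def by auto
  qed
qed

context setting begin

interpretation S: vector_space sc by (rule vs)
interpretation C: vector_space "cyc_scale sc" by (rule cyc_vs[OF vs])

lemma nxt_mod: "nxt n ((b + j) mod n) = (b + Suc j) mod n"
  unfolding nxt_def by (simp add: mod_Suc_eq)

lemma act_pos: "k < r \<Longrightarrow> act k i \<Longrightarrow> 1 \<le> fm k"
  using act_part[of k i] open_zero n1 by (cases "fm k = 0") auto

lemma act_repr:
  assumes "k < r" "act k i" "i < n"
  shows "\<exists>j. 1 \<le> j \<and> j \<le> fm k \<and> i = (fb k + j) mod n"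
proof (cases "fm k = n")
  case True
  have b: "fb k < n" using fb_lt assms by simp
  show ?thesis
  proof (cases "off n (fb k) i = 0")
    case True
    hence "i = fb k" using off_zero_eq[OF b assms(3)] by simp
    thus ?thesis using \<open>fm k = n\<close> n1 b by (intro exI[of _ n]) auto
  next
    case False
    thus ?thesis using \<open>fm k = n\<close> mod_off[OF b assms(3)] off_lt[OF n1, of "fb k" i]
      by (intro exI[of _ "off n (fb k) i"]) auto
  qed
next
  case False
  hence "i \<in> cint_open n (fb k) (fm k)" using act_part assms by blast
  thus ?thesis unfolding cint_open_def by auto
qed

lemma Phi_surj:
  assumes "c \<in> cycles n V E"
  shows "\<exists>x\<in>BB. Phi x = c"
proof -
  obtain v al where c: "c = (v, al)" by (cases c) auto
  have X: "\<forall>i<n. (v i, al i, v (nxt n i)) \<in> E i" "\<forall>i\<ge>n. v i = 0 \<and> al i = 0"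
    using assms c cyc_mem by auto
  have nl: "\<And>i. nxt n i < n" using nxt_lt n1 by simp
  have vV: "v i \<in> V i" "v (nxt n i) \<in> V (nxt n i)" if "i < n" for i
    using X(1) V_sub that by blast+
  define w where "w i = ff i (v i)" for i
  have wV: "w i \<in> V' i" if "i < n" for i using ff_in[OF that vV(1)[OF that]] w_def by simp
  have wE: "(w i, al i, w (nxt n i)) \<in> E' i" if "i < n" for i
    using ff_edge[OF that vV[OF that]] X(1)[rule_format, OF that] w_def by simp
  define PB where "PB i bs \<longleftrightarrow> length bs = r \<and> al i = sum_list bs \<and>
     (\<forall>k<r. \<exists>c. w i ! k = c * uu k i \<and> bs ! k = c * fal k i \<and> w (nxt n i) ! k = c * uu k (nxt n i))"
    for i bs
  define bs where "bs i = (SOME bs. PB i bs)" for i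
  have bs: "PB i (bs i)" if "i < n" for i
  proof -
    have "\<exists>b. PB i b" using wE[OF that] unfolding E'_mem PB_def by blast
    thus ?thesis unfolding bs_def by (rule someI_ex)
  qed
  have dec: "\<exists>c. w i ! k = c * uu k i \<and> bs i ! k = c * fal k i \<and> w (nxt n i) ! k = c * uu k (nxt n i)"
    if "i < n" "k < r" for i k using bs[OF that(1)] that unfolding PB_def by blast
  define x where "x k = (if k < r then (if 1 \<le> fm k then w ((fb k + 1) mod n) ! k
      else bs (fb k) ! k / fal k (fb k)) else 0)" for k
  have chain: "w ((fb k + j) mod n) ! k = x k" if kr: "k < r" and m1: "1 \<le> fm k" and j1: "1 \<le> j" and jm: "j \<le> fm k" for k j
    using j1 jm
  proof (induction j rule: dec_induct)
    case base thus ?case using kr m1 unfolding x_def by simp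
  next
    case (step j)
    let ?p = "(fb k + j) mod n"
    have p: "?p < n" using n1 by simp
    have a1: "act k ?p"
    proof (cases "fm k = n")
      case True thus ?thesis using act_full by simp
    next
      case False thus ?thesis using act_part[OF False] step unfolding cint_open_def
        by (auto intro!: exI[of _ j])
    qed
    have a2: "act k (nxt n ?p)" unfolding nxt_mod
    proof (cases "fm k = n")
      case True thus "act k ((fb k + Suc j) mod n)" using act_full by simp
    next
      case False thus "act k ((fb k + Suc j) mod n)" using act_part[OF False] step unfolding cint_open_def
        by (auto intro!: exI[of _ "Suc j"])
    qed
    obtain cc where "w ?p ! k = cc * uu k ?p" "w (nxt n ?p) ! k = cc * uu k (nxt n ?p)"
      using dec[OF p kr] by blast
    hence "w (nxt n ?p) ! k = w ?p ! k" using a1 a2 unfolding uu_def by simp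
    thus ?case using step nxt_mod by simp
  qed
  have VC: "w i ! k = x k * uu k i" if ii: "i < n" and kk: "k < r" for i k
  proof (cases "act k i")
    case False
    have "act k i \<or> w i ! k = 0" using wV[OF ii] kk unfolding V'_mem by blast
    thus ?thesis using False unfolding uu_def by simp
  next
    case True
    obtain j where j: "1 \<le> j" "j \<le> fm k" "i = (fb k + j) mod n" using act_repr[OF kk True ii] by blast
    thus ?thesis using chain[OF kk act_pos[OF kk True] j(1,2)] True unfolding uu_def by simp
  qed
  have LC: "bs i ! k = x k * fal k i" if ii: "i < n" and kk: "k < r" for i k
  proof -
    obtain cc where cc: "w i ! k = cc * uu k i" "bs i ! k = cc * fal k i" "w (nxt n i) ! k = cc * uu k (nxt n i)"
      using dec[OF ii kk] by blast
    show ?thesis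
    proof (cases "act k i")
      case True thus ?thesis using cc VC[OF ii kk] unfolding uu_def by simp
    next
      case na: False
      show ?thesis
      proof (cases "act k (nxt n i)")
        case True thus ?thesis using cc VC[OF nl kk] unfolding uu_def by simp
      next
        case nb: False
        show ?thesis
        proof (cases "fal k i = 0")
          case True thus ?thesis using cc by simp
        next
          case nz: False
          have mn: "fm k \<noteq> n" using na act_full by blast
          hence mlt: "fm k < n" using fm_le[OF kk] by simp
          have icl: "i \<in> cint_closed n (fb k) (fm k)" using fal_supp[OF kk mlt ii nz] .
          show ?thesis
          proof (cases "fm k = 0")
            case False
            have "i = fb k \<or> i \<in> cint_open n (fb k) (fm k)" using closed_cases[OF fb_lt[OF kk] icl] .
            moreover have "i \<notin> cint_open n (fb k) (fm k)" using na act_part[OF mn] by blast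
            moreover have "(fb k + 1) mod n \<in> cint_open n (fb k) (fm k)" using succ_open False by simp
            hence "act k (nxt n (fb k))" using act_part[OF mn] unfolding nxt_def by simp
            ultimately have "i = fb k" by blast
            hence False using nb \<open>act k (nxt n (fb k))\<close> by simp
            thus ?thesis ..
          next
            case True
            hence ib: "i = fb k" using icl closed_zero[OF fb_lt[OF kk]] by simp
            have "x k = bs (fb k) ! k / fal k (fb k)" unfolding x_def using ii kk True by simp
            also have "\<dots> = cc" using cc(2) ib nz by simp
            finally show ?thesis using cc(2) by simp
          qed
        qed
      qed
    qed
  qed
  have pvw: "pv x i = w i" if "i < n" for i
  proof -
    have "length (w i) = r" using wV[OF that] unfolding V'_mem by simp
    show ?thesis unfolding pv_def
    proof (rule nth_equalityI)
      show "length (map (\<lambda>k. x k * uu k i) [0..<r]) = length (w i)" using \<open>length (w i) = r\<close> by simp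
    next
      fix k assume "k < length (map (\<lambda>k. x k * uu k i) [0..<r])"
      hence k: "k < r" by simp
      thus "map (\<lambda>k. x k * uu k i) [0..<r] ! k = w i ! k" using VC[OF that k] by simp
    qed
  qed
  have plw: "pl x i = al i" if "i < n" for i
  proof -
    have "al i = sum_list (bs i)" using bs[OF that] unfolding PB_def by simp
    also have "\<dots> = (\<Sum>k = 0..<r. bs i ! k)" using bs[OF that] unfolding PB_def
      by (simp add: sum_list_sum_nth)
    also have "\<dots> = (\<Sum>k<r. x k * fal k i)" using LC[OF that] by (simp add: atLeast0LessThan)
    finally show ?thesis unfolding pl_def by simp
  qed
  have f1: "(if i < n then gg i (pv x i) else 0) = v i" for i
  proof (cases "i < n")
    case True thus ?thesis using pvw[OF True] gg_ff[OF True vV(1)[OF True]] w_def by simp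
  next
    case False thus ?thesis using X(2) by simp
  qed
  have f2: "(if i < n then pl x i else 0) = al i" for i
  proof (cases "i < n")
    case True thus ?thesis using plw[OF True] by simp
  next
    case False thus ?thesis using X(2) by simp
  qed
  have "Phi x = (v, al)"
    unfolding Phi_def using f1 f2 by (simp add: fun_eq_iff)
  moreover have "x \<in> BB" unfolding BB_def CP_def x_def by auto
  ultimately show ?thesis using c by blast
qed

end


context setting begin

interpretation S: vector_space sc by (rule vs)
interpretation C: vector_space "cyc_scale sc" by (rule cyc_vs[OF vs])

lemma BB_mem: "x \<in> BB \<longleftrightarrow> (\<forall>k\<ge>r. x k = 0)"
proof
  assume "x \<in> BB" thus "\<forall>k\<ge>r. x k = 0" unfolding BB_def CP_def using not_le by blast
next
  assume h: "\<forall>k\<ge>r. x k = 0"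
  have "\<forall>k. x k \<noteq> 0 \<longrightarrow> k < r" using h not_le by blast
  thus "x \<in> BB" unfolding BB_def CP_def by simp
qed

lemma BB_diff: "x \<in> BB \<Longrightarrow> y \<in> BB \<Longrightarrow> x - y \<in> BB"
  unfolding BB_mem by simp

lemma CP_add: "a + b \<in> CP r P" if "a \<in> CP r P" "b \<in> CP r P" for a b :: "nat \<Rightarrow> 'a"
proof -
  have "\<forall>k. (a + b) k \<noteq> 0 \<longrightarrow> a k \<noteq> 0 \<or> b k \<noteq> 0" by auto
  thus ?thesis using that unfolding CP_def by blast
qed

lemma CP_BB: "a \<in> CP r P \<Longrightarrow> a \<in> BB"
  unfolding BB_def CP_def by blast

lemma CP_mono: "a \<in> CP r P \<Longrightarrow> (\<And>k. P k \<Longrightarrow> Q k) \<Longrightarrow> a \<in> CP r Q"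
  unfolding CP_def by blast

lemma Phi_inj: assumes "x \<in> BB" "y \<in> BB" "Phi x = Phi y" shows "x = y"
proof -
  have "Phi x - Phi y \<in> cycles_span n V E SEmpty"
    using assms(3) C.subspace_0[OF cspan_sub] by simp
  hence "zc SEmpty (x - y)" using Phi_diff_span[of SEmpty] unfolding is_span_def by simp
  hence "\<forall>k<r. (x - y) k = 0" using zc_empty by blast
  moreover have "\<forall>k\<ge>r. (x - y) k = 0" using BB_diff[OF assms(1,2)] BB_mem by blast
  ultimately have "\<And>k. (x - y) k = 0" using linorder_not_le by blast
  thus ?thesis by (simp add: fun_eq_iff)
qed

lemma Phi_cong:
  assumes "is_span n s" "x \<in> BB" "y \<in> BB"
  shows "Phi x - Phi y \<in> cycles_span n V E s \<longleftrightarrow> x - y \<in> CP r (\<lambda>k. span_le n (fsp k) s)"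
proof -
  have z: "\<forall>k\<ge>r. (x - y) k = 0" using BB_diff[OF assms(2,3)] BB_mem by blast
  have "Phi x - Phi y \<in> cycles_span n V E s \<longleftrightarrow> zc s (x - y)" by (rule Phi_diff_span[OF assms(1)])
  also have "\<dots> \<longleftrightarrow> (\<forall>k<r. (x - y) k \<noteq> 0 \<longrightarrow> span_le n (fsp k) s)" by (rule ZC[OF assms(1) z])
  also have "\<dots> \<longleftrightarrow> x - y \<in> CP r (\<lambda>k. span_le n (fsp k) s)"
    unfolding CP_def mem_Collect_eq using z not_le by blast
  finally show ?thesis .
qed

lemma cycles_img: "cycles n V E = Phi ` BB"
proof
  show "cycles n V E \<subseteq> Phi ` BB"
  proof
    fix c assume "c \<in> cycles n V E"
    then obtain x where "x \<in> BB" "Phi x = c" using Phi_surj by blast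
    thus "c \<in> Phi ` BB" by blast
  qed
  show "Phi ` BB \<subseteq> cycles n V E" using Phi_cyc by blast
qed

lemma cycles_fin: "finite (cycles n V E)"
  unfolding cycles_img BB_def by (intro finite_imageI finite_CP)

lemma count_main:
  assumes J: "\<And>s. s \<in> J \<Longrightarrow> is_span n s"
  shows "card (C.span (\<Union> (cycles_span n V E ` J))) = card (CP r (\<lambda>k. \<exists>s\<in>J. span_le n (fsp k) s) :: (nat \<Rightarrow> 'a) set)"
proof -
  let ?W = "C.span (\<Union> (cycles_span n V E ` J))"
  let ?Q = "\<lambda>k. \<exists>s\<in>J. span_le n (fsp k) s"
  have Wsub: "?W \<subseteq> cycles n V E"
  proof (rule C.span_minimal[OF _ cyc_sub])
    show "\<Union> (cycles_span n V E ` J) \<subseteq> cycles n V E" unfolding cycles_span_def by blast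
  qed
  obtain x0 where x0: "x0 \<in> BB" "Phi x0 = 0"
    using Phi_surj[OF C.subspace_0[OF cyc_sub]] by blast
  have bk: "x - x0 \<in> CP r ?Q" if "w \<in> ?W" "x \<in> BB" "Phi x = w" for w x
    using that
  proof (induction w arbitrary: x rule: C.span_induct_alt)
    case base
    hence "x = x0" using Phi_inj[of x x0] x0 by simp
    thus ?case unfolding CP_def by simp
  next
    case (step c t y)
    then obtain s where s: "s \<in> J" "t \<in> cycles_span n V E s" by blast
    have tc: "t \<in> cycles n V E" using s unfolding cycles_span_def by simp
    have yc: "y \<in> cycles n V E"
    proof -
      have "y = Phi x - cyc_scale sc c t" using step.prems(2) by (simp add: eq_diff_eq add.commute)
      thus ?thesis using C.subspace_diff[OF cyc_sub Phi_cyc C.subspace_scale[OF cyc_sub tc]] by simp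
    qed
    obtain x' where x': "x' \<in> BB" "Phi x' = y" using Phi_surj[OF yc] by blast
    have h1: "x' - x0 \<in> CP r ?Q" using step.IH x' by blast
    have "Phi x - Phi x' = cyc_scale sc c t" using step.prems(2) x'(2) by simp
    hence "Phi x - Phi x' \<in> cycles_span n V E s" using C.subspace_scale[OF cspan_sub s(2)] by simp
    hence "x - x' \<in> CP r (\<lambda>k. span_le n (fsp k) s)" using Phi_cong[OF J[OF s(1)] step.prems(1) x'(1)] by simp
    hence h2: "x - x' \<in> CP r ?Q" using CP_mono[of "x - x'" "\<lambda>k. span_le n (fsp k) s" ?Q] s(1) by blast
    have eq: "x - x' + (x' - x0) = x - x0" by (rule ext) simp
    show ?case using CP_add[OF h2 h1] unfolding eq .
  qed
  have fwd: "Phi x \<in> ?W" if xB: "x \<in> BB" and xQ: "x - x0 \<in> CP r ?Q" for x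
  proof -
    define y where "y j = (\<lambda>i. if i < j then x i else x0 i)" for j
    have yB: "y j \<in> BB" for j
      using xB x0(1) unfolding BB_mem y_def by simp
    have "Phi (y j) \<in> ?W" for j
    proof (induction j)
      case 0
      have "y 0 = x0" unfolding y_def by simp
      thus ?case using x0(2) C.span_zero by simp
    next
      case (Suc j)
      show ?case
      proof (cases "x j = x0 j")
        case True
        have "y (Suc j) = y j" unfolding y_def using True by (auto simp: fun_eq_iff less_Suc_eq)
        thus ?thesis using Suc.IH by simp
      next
        case False
        hence "(x - x0) j \<noteq> 0" by simp
        hence "j < r \<and> ?Q j" using xQ unfolding CP_def by blast
        then obtain s where s: "s \<in> J" "span_le n (fsp j) s" and jr: "j < r" by blast
        have "y (Suc j) - y j \<in> CP r (\<lambda>k. span_le n (fsp k) s)"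
        proof -
          have "\<forall>k. (y (Suc j) - y j) k \<noteq> 0 \<longrightarrow> k = j" unfolding y_def by (simp add: less_Suc_eq)
          thus ?thesis unfolding CP_def using jr s(2) by blast
        qed
        hence "Phi (y (Suc j)) - Phi (y j) \<in> cycles_span n V E s"
          using Phi_cong[OF J[OF s(1)] yB yB] by simp
        hence d: "Phi (y (Suc j)) - Phi (y j) \<in> ?W" using s(1) by (intro C.span_base) blast
        have "Phi (y (Suc j)) = (Phi (y (Suc j)) - Phi (y j)) + Phi (y j)" by simp
        thus ?thesis using C.span_add[OF d Suc.IH] by simp
      qed
    qed
    moreover have "y r = x"
    proof
      fix i show "y r i = x i"
        using xB x0(1) unfolding BB_mem y_def by (cases "i < r") auto
    qed
    ultimately show ?thesis by metis
  qed
  have img: "?W = Phi ` ((\<lambda>z. z + x0) ` CP r ?Q)"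
  proof
    show "?W \<subseteq> Phi ` ((\<lambda>z. z + x0) ` CP r ?Q)"
    proof
      fix w assume w: "w \<in> ?W"
      then obtain x where x: "x \<in> BB" "Phi x = w" using Phi_surj Wsub by blast
      have "x - x0 \<in> CP r ?Q" using bk[OF w x] .
      moreover have "x = (x - x0) + x0" by simp
      ultimately show "w \<in> Phi ` ((\<lambda>z. z + x0) ` CP r ?Q)" using x(2) by blast
    qed
  next
    show "Phi ` ((\<lambda>z. z + x0) ` CP r ?Q) \<subseteq> ?W"
    proof
      fix w assume "w \<in> Phi ` ((\<lambda>z. z + x0) ` CP r ?Q)"
      then obtain z where z: "z \<in> CP r ?Q" "w = Phi (z + x0)" by blast
      have "z + x0 \<in> BB" using CP_BB[OF z(1)] x0(1) unfolding BB_mem by simp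
      moreover have "z + x0 - x0 \<in> CP r ?Q" using z(1) by simp
      ultimately show "w \<in> ?W" using fwd z(2) by blast
    qed
  qed
  have sub: "(\<lambda>z. z + x0) ` CP r ?Q \<subseteq> BB"
  proof
    fix w assume "w \<in> (\<lambda>z. z + x0) ` CP r ?Q"
    then obtain z where z: "z \<in> CP r ?Q" "w = z + x0" by blast
    show "w \<in> BB" using CP_BB[OF z(1)] x0(1) z(2) unfolding BB_mem by simp
  qed
  have inj1: "inj_on Phi ((\<lambda>z. z + x0) ` CP r ?Q)"
    using Phi_inj sub by (meson inj_onI subsetD)
  have inj2: "inj_on (\<lambda>z. z + x0) (CP r ?Q)" by (rule inj_onI) simp
  show ?thesis unfolding img card_image[OF inj1] card_image[OF inj2] by simp
qed
end


lemma mset_count: "count (mset (map g xs)) s = length (filter (\<lambda>f. g f = s) xs)"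
  by (induction xs) auto

context setting begin

interpretation S: vector_space sc by (rule vs)
interpretation C: vector_space "cyc_scale sc" by (rule cyc_vs[OF vs])

lemma finA: "finite (UNIV :: 'a set)" by simp

lemma cdim_span:
  assumes "is_span n s"
  shows "cdim sc (cycles_span n V E s) = card {k. k < r \<and> span_le n (fsp k) s}"
proof -
  have sp: "C.span (cycles_span n V E s) = cycles_span n V E s"
    using cspan_sub[of s] C.span_eq_iff by blast
  have "card (cycles_span n V E s) = card (CP r (\<lambda>k. \<exists>s'\<in>{s}. span_le n (fsp k) s') :: (nat \<Rightarrow> 'a) set)"
    using count_main[of "{s}"] assms sp by simp
  also have "\<dots> = card (UNIV :: 'a set) ^ card {k. k < r \<and> span_le n (fsp k) s}"
    using card_CP[where 'a='a] by simp
  finally have c: "card (cycles_span n V E s) = card (UNIV :: 'a set) ^ card {k. k < r \<and> span_le n (fsp k) s}" .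
  have fin: "finite (cycles_span n V E s)"
    using cycles_fin unfolding cycles_span_def by simp
  show ?thesis unfolding cdim_def using C.dim_from_card[OF finA cspan_sub fin c] .
qed

lemma cdim_below:
  assumes "is_span n s"
  shows "cdim sc (cycles_below sc n V E s) = card {k. k < r \<and> span_le n (fsp k) s \<and> fsp k \<noteq> s}"
proof -
  let ?J = "{s'. is_span n s' \<and> span_le n s' s \<and> s' \<noteq> s}"
  have eq: "{cycles_span n V E s' |s'. is_span n s' \<and> span_le n s' s \<and> s' \<noteq> s} = cycles_span n V E ` ?J"
    by blast
  have W: "cycles_below sc n V E s = C.span (\<Union> (cycles_span n V E ` ?J))"
    unfolding cycles_below_def eq ..
  have "card (cycles_below sc n V E s) = card (CP r (\<lambda>k. \<exists>s'\<in>?J. span_le n (fsp k) s') :: (nat \<Rightarrow> 'a) set)"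
    unfolding W by (rule count_main) simp
  also have "\<dots> = card (UNIV :: 'a set) ^ card {k. k < r \<and> (\<exists>s'\<in>?J. span_le n (fsp k) s')}"
    using card_CP[where 'a='a] by simp
  also have "{k. k < r \<and> (\<exists>s'\<in>?J. span_le n (fsp k) s')} = {k. k < r \<and> span_le n (fsp k) s \<and> fsp k \<noteq> s}"
  proof (rule Collect_cong)
    fix k
    have "(\<exists>s'\<in>?J. span_le n (fsp k) s') \<longleftrightarrow> (\<exists>s'. is_span n s' \<and> span_le n s' s \<and> s' \<noteq> s \<and> span_le n (fsp k) s')"
      by blast
    thus "(k < r \<and> (\<exists>s'\<in>?J. span_le n (fsp k) s')) \<longleftrightarrow> (k < r \<and> span_le n (fsp k) s \<and> fsp k \<noteq> s)"
      using Q_iff[OF _ assms, of k] by blast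
  qed
  finally have c: "card (cycles_below sc n V E s) = card (UNIV :: 'a set) ^ card {k. k < r \<and> span_le n (fsp k) s \<and> fsp k \<noteq> s}" .
  have sub: "C.subspace (cycles_below sc n V E s)" unfolding W by simp
  have "cycles_below sc n V E s \<subseteq> cycles n V E"
    unfolding W by (rule C.span_minimal[OF _ cyc_sub]) (auto simp: cycles_span_def)
  hence fin: "finite (cycles_below sc n V E s)" using cycles_fin finite_subset by blast
  show ?thesis unfolding cdim_def using C.dim_from_card[OF finA sub fin c] .
qed

lemma count_formula:
  assumes "is_span n s"
  shows "count_span n fs s = cdim sc (cycles_span n V E s) - cdim sc (cycles_below sc n V E s)"
proof -
  have cs: "count_span n fs s = card {k. k < r \<and> fsp k = s}"
    unfolding count_span_def length_filter_conv_card fsp_def ..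
  let ?A = "{k. k < r \<and> span_le n (fsp k) s \<and> fsp k \<noteq> s}"
  let ?B = "{k. k < r \<and> fsp k = s}"
  have "{k. k < r \<and> span_le n (fsp k) s} = ?A \<union> ?B"
  proof (rule set_eqI)
    fix k show "k \<in> {k. k < r \<and> span_le n (fsp k) s} \<longleftrightarrow> k \<in> ?A \<union> ?B"
      using fsp_refl[of k] by auto
  qed
  moreover have "?A \<inter> ?B = {}" by auto
  ultimately have "card {k. k < r \<and> span_le n (fsp k) s} = card ?A + card ?B"
    by (simp add: card_Un_disjoint)
  thus ?thesis unfolding cdim_span[OF assms] cdim_below[OF assms] cs by simp
qed

lemma count_nonspan:
  assumes "\<not> is_span n s" shows "count_span n fs s = 0"
proof -
  have "\<forall>f\<in>set fs. factor_span n f \<noteq> s"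
  proof
    fix f assume f: "f \<in> set fs"
    then obtain k where k: "k < r" "f = fs ! k" unfolding in_set_conv_nth by blast
    have "is_span n (factor_span n f)" using fsp_span[OF k(1)] k(2) unfolding fsp_def by simp
    thus "factor_span n f \<noteq> s" using assms by blast
  qed
  thus ?thesis unfolding count_span_def by (simp add: filter_empty_conv)
qed

end

lemma setting_from:
  fixes sc :: "'a::{finite, field} \<Rightarrow> 'v::ab_group_add \<Rightarrow> 'v"
  assumes "1 \<le> n" "vector_space sc" "linear_trellis sc n V E" "elem_factorization n V E fs"
  shows "setting n fs sc V E"
proof -
  note e = assms(4)[unfolded elem_factorization_def]
  show ?thesis
  proof (rule setting.intro)
    show "fctx n fs"
      by (rule fctx.intro[OF assms(1) e[THEN conjunct1] e[THEN conjunct2, THEN conjunct1]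
            e[THEN conjunct2, THEN conjunct2, THEN conjunct1]])
    show "setting_axioms n fs sc V E"
      by (rule setting_axioms.intro[OF assms(2) assms(3) e[THEN conjunct2, THEN conjunct2, THEN conjunct2]])
  qed
qed

theorem mainTheorem8:
  fixes sc :: "'a::{finite, field} \<Rightarrow> 'v::ab_group_add \<Rightarrow> 'v"
    and n :: nat
    and V :: "nat \<Rightarrow> 'v set"
    and E :: "nat \<Rightarrow> ('v \<times> 'a \<times> 'v) set"
    and fs fs' :: "((nat \<Rightarrow> 'a) \<times> nat \<times> nat) list"
  assumes "1 \<le> n"
    and "vector_space sc"
    and "linear_trellis sc n V E"
    and "trim n V E"
    and "reduced n V E"
    and "elem_factorization n V E fs"
    and "elem_factorization n V E fs'"
  shows "mset (map (factor_span n) fs) = mset (map (factor_span n) fs')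
       \<and> (\<forall>s. is_span n s \<longrightarrow>
            count_span n fs s = cdim sc (cycles_span n V E s) - cdim sc (cycles_below sc n V E s))"
proof -
  have A: "setting n fs sc V E" using setting_from assms(1,2,3,6) .
  have B: "setting n fs' sc V E" using setting_from assms(1,2,3,7) .
  have eq: "count_span n fs s = count_span n fs' s" for s
  proof (cases "is_span n s")
    case True show ?thesis unfolding setting.count_formula[OF A True] setting.count_formula[OF B True] ..
  next
    case False show ?thesis unfolding setting.count_nonspan[OF A False] setting.count_nonspan[OF B False] ..
  qed
  have "mset (map (factor_span n) fs) = mset (map (factor_span n) fs')"
  proof (rule multiset_eqI)
    fix x show "count (mset (map (factor_span n) fs)) x = count (mset (map (factor_span n) fs')) x"
      unfolding mset_count using eq[of x] unfolding count_span_def .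
  qed
  moreover have "\<forall>s. is_span n s \<longrightarrow>
            count_span n fs s = cdim sc (cycles_span n V E s) - cdim sc (cycles_below sc n V E s)"
    by (intro allI impI) (rule setting.count_formula[OF A])
  ultimately show ?thesis by (rule conjI)
qed


end
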